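(* For every integer $n\ge 1$, \[ m-A_m^{n}=0 \quad (m=1,\dots,2n), \qquad (2n+1)-A_{2n+1}^{n}=(-1)^n\frac{(n!)^2}{((2n)!)^2}. \]
   Context: For $n\ge1$ let $y_n(z)=\sum_{k=0}^{n}\frac{(n+k)!}{(n-k)!\,k!}\left(\frac{z}{2}\right)^k$ be the $n$-th Bessel polynomial and let $\alpha_{n1},\dots,\alpha_{nn}$ be its zeros (they are simple). Put $a_{nk}=1-\alpha_{nk}/2$ and $b_{nk}=1+\alpha_{nk}/2$ for $k=1,\dots,n$. For $m\ge1$ define $A_m^{n}=\sum_{k=1}^n\big(a_{nk}^m-b_{nk}^m\big)$. *)

theory Defs
  imports "HOL-Computational_Algebra.Polynomial" Complex_Main
begin

definition bessel_poly :: "nat \<Rightarrow> complex poly" where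
  "bessel_poly n = (\<Sum>k=0..n. monom (of_nat (fact (n+k)) / (of_nat (fact (n-k)) * of_nat (fact k)) / 2 ^ k) k)"

text \<open>The set of zeros of y_n (they are simple, so this set lists alpha_{n1},...,alpha_{nn}).\<close>
definition bessel_zeros :: "nat \<Rightarrow> complex set" where
  "bessel_zeros n = {z. poly (bessel_poly n) z = 0}"

definition A_sum :: "nat \<Rightarrow> nat \<Rightarrow> complex" where
  "A_sum m n = (\<Sum>\<alpha>\<in>bessel_zeros n. (1 - \<alpha>/2) ^ m - (1 + \<alpha>/2) ^ m)"

end

theory Submission
  imports Defs "HOL-Computational_Algebra.Computational_Algebra"
begin

definition bd :: "nat \<Rightarrow> nat \<Rightarrow> complex" where
  "bd n k = of_nat (fact (n+k)) / (of_nat (fact (n-k)) * of_nat (fact k)) / 2 ^ k"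

lemma coeff_bessel: "coeff (bessel_poly n) k = (if k \<le> n then bd n k else 0)"
  unfolding bessel_poly_def bd_def by (simp add: coeff_sum coeff_monom)

lemma bd_rec:
  assumes "k < n"
  shows "2 * of_nat (k+1) * bd n (k+1) = (of_nat n - of_nat k) * (of_nat n + of_nat k + 1) * bd n k"
proof -
  obtain j where j: "n - k = Suc j" "n - (k+1) = j" using assms by (metis Suc_diff_Suc diff_Suc_1 Suc_eq_plus1 diff_diff_left)
  have nk: "(of_nat n - of_nat k :: complex) = of_nat (Suc j)" using assms j by (simp add: of_nat_diff[symmetric])
  have f1: "fact (n + (k+1)) = (n+k+1) * (fact (n+k) :: nat)" by (simp add: algebra_simps)
  define F :: complex where "F = of_nat (fact (n+k))"
  define J :: complex where "J = of_nat (fact j)"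
  define K :: complex where "K = of_nat (fact k)"
  have F0: "F \<noteq> 0" "J \<noteq> 0" "K \<noteq> 0" unfolding F_def J_def K_def by auto
  have e1: "bd n (k+1) = of_nat (n+k+1) * F / (J * (of_nat (k+1) * K)) / 2^(k+1)"
    unfolding bd_def j F_def J_def K_def by (simp add: f1 algebra_simps)
  have e2: "bd n k = F / (of_nat (Suc j) * J * K) / 2^k"
    unfolding bd_def j F_def J_def K_def by (simp add: algebra_simps)
  have p: "(of_nat (k+1)::complex) \<noteq> 0" "(of_nat (Suc j)::complex) \<noteq> 0" by (simp_all del: of_nat_Suc)
  show ?thesis unfolding e1 e2 nk using F0 p
    by (simp add: field_simps del: of_nat_Suc) (simp add: algebra_simps)
qed

lemma coeff_rec: "2 * of_nat (k+1) * coeff (bessel_poly n) (k+1) = (of_nat n - of_nat k) * (of_nat n + of_nat k + 1) * coeff (bessel_poly n) k"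
proof (cases "k < n")
  case True then show ?thesis using bd_rec[OF True] by (simp add: coeff_bessel)
next
  case False
  then show ?thesis by (cases "k = n") (auto simp: coeff_bessel)
qed

lemma bessel_ode_monom:
  fixes n :: nat
  defines "y \<equiv> bessel_poly n"
  shows "monom 1 2 * pderiv (pderiv y) + smult 2 (pCons 0 (pderiv y)) + smult 2 (pderiv y)
         = smult (of_nat (n*(n+1))) y"
proof (rule poly_eqI)
  fix k
  have r: "2 * of_nat (k+1) * coeff y (k+1) = (of_nat n - of_nat k) * (of_nat n + of_nat k + 1) * coeff y k"
    unfolding y_def by (rule coeff_rec)
  have a: "coeff (monom 1 2 * pderiv (pderiv y)) k = of_nat k * (of_nat k - 1) * coeff y k"
  proof (cases "k < 2")
    case True then have "k = 0 \<or> k = 1" by auto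
    then show ?thesis by (auto simp: coeff_monom_mult)
  next
    case False
    then obtain j where "k = Suc (Suc j)" by (metis add_2_eq_Suc le_add_diff_inverse not_less)
    then show ?thesis by (simp add: coeff_monom_mult coeff_pderiv)
  qed
  have b: "coeff (pCons 0 (pderiv y)) k = of_nat k * coeff y k"
    by (cases k) (simp_all add: coeff_pderiv)
  have c: "coeff (pderiv y) k = of_nat (k+1) * coeff y (k+1)"
    by (simp add: coeff_pderiv)
  show "coeff (monom 1 2 * pderiv (pderiv y) + smult 2 (pCons 0 (pderiv y)) + smult 2 (pderiv y)) k
       = coeff (smult (of_nat (n*(n+1))) y) k"
    unfolding coeff_add coeff_smult a b c using r by (simp add: algebra_simps)
qed

lemma bessel_ode_pt:
  "z^2 * poly (pderiv (pderiv (bessel_poly n))) z + 2 * z * poly (pderiv (bessel_poly n)) z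
     + 2 * poly (pderiv (bessel_poly n)) z = of_nat (n*(n+1)) * poly (bessel_poly n) z"
proof -
  have "poly (monom 1 2 * pderiv (pderiv (bessel_poly n)) + smult 2 (pCons 0 (pderiv (bessel_poly n))) + smult 2 (pderiv (bessel_poly n))) z
         = poly (smult (of_nat (n*(n+1))) (bessel_poly n)) z"
    using bessel_ode_monom[of n] by simp
  then show ?thesis by (simp add: poly_monom algebra_simps)
qed

lemma bessel_G:
  fixes n :: nat and z :: complex
  defines "y \<equiv> bessel_poly n"
  shows "z^2 * (poly (pderiv y) z * poly y (-z) + poly (pderiv y) (-z) * poly y z) + 2 * poly y z * poly y (-z) = 2"
proof -
  define f1 where "f1 = pderiv y"
  define f2 where "f2 = pderiv f1"
  define g where "g = pcompose y [:0,-1:]"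
  define g1 where "g1 = pderiv g"
  define g2 where "g2 = pderiv g1"
  have pg: "poly g x = poly y (-x)" for x unfolding g_def by (simp add: poly_pcompose)
  have pg1: "poly g1 x = - poly f1 (-x)" for x unfolding g1_def g_def f1_def
    by (simp add: pderiv_pcompose poly_pcompose pderiv_pCons)
  have pg2: "poly g2 x = poly f2 (-x)" for x unfolding g2_def g1_def g_def f2_def f1_def
    by (simp add: pderiv_pcompose poly_pcompose pderiv_pCons pcompose_uminus pderiv_minus)
  define Gp where "Gp = [:0,0,1:] * (f1 * g - g1 * y) + smult 2 (y * g)"
  have dG: "poly (pderiv Gp) x = 2 * x * (poly f1 x * poly g x - poly g1 x * poly y x)
     + x^2 * (poly f2 x * poly g x - poly g2 x * poly y x) + 2 * (poly y x * poly g1 x + poly g x * poly f1 x)" for x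
    unfolding Gp_def by (simp add: pderiv_mult pderiv_add pderiv_diff pderiv_smult pderiv_pCons
       f1_def[symmetric] f2_def[symmetric] g1_def[symmetric] g2_def[symmetric] algebra_simps power2_eq_square)
  have "poly (pderiv Gp) x = 0" for x
  proof -
    have o1: "x^2 * poly f2 x + 2 * x * poly f1 x + 2 * poly f1 x = of_nat (n*(n+1)) * poly y x"
      using bessel_ode_pt[of x n] unfolding f2_def f1_def y_def .
    have o2: "(-x)^2 * poly f2 (-x) + 2 * (-x) * poly f1 (-x) + 2 * poly f1 (-x) = of_nat (n*(n+1)) * poly y (-x)"
      using bessel_ode_pt[of "-x" n] unfolding f2_def f1_def y_def .
    have "poly (pderiv Gp) x = poly y (-x) * ((x^2 * poly f2 x + 2 * x * poly f1 x + 2 * poly f1 x) - of_nat (n*(n+1)) * poly y x)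
       - poly y x * (((-x)^2 * poly f2 (-x) + 2 * (-x) * poly f1 (-x) + 2 * poly f1 (-x)) - of_nat (n*(n+1)) * poly y (-x))"
      unfolding dG pg pg1 pg2 by (simp add: algebra_simps power2_eq_square)
    then show ?thesis using o1 o2 by simp
  qed
  then have "poly (pderiv Gp) = poly 0" by auto
  then have "pderiv Gp = 0" by (simp only: poly_eq_poly_eq_iff)
  then obtain h where h: "Gp = [:h:]" using pderiv_iszero by blast
  have y0: "poly y 0 = 1" unfolding y_def by (simp add: poly_0_coeff_0 coeff_bessel bd_def)
  have "h = 2" using arg_cong[OF h, of "\<lambda>p. poly p 0"] unfolding Gp_def by (simp add: pg y0)
  then have "poly Gp z = 2" using h by simp
  then show ?thesis unfolding Gp_def by (simp add: pg pg1 f1_def algebra_simps power2_eq_square)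
qed

lemma bd_nn_nz: "bd n n \<noteq> 0"
  unfolding bd_def by simp

lemma degree_bessel: "degree (bessel_poly n) = n"
proof (rule antisym)
  show "degree (bessel_poly n) \<le> n" by (rule degree_le) (simp add: coeff_bessel)
  show "n \<le> degree (bessel_poly n)" by (rule le_degree) (simp add: coeff_bessel bd_nn_nz)
qed

lemma lead_bessel: "lead_coeff (bessel_poly n) = bd n n"
  by (simp add: degree_bessel coeff_bessel)

lemma bessel_nz: "bessel_poly n \<noteq> 0"
  using lead_bessel[of n] bd_nn_nz[of n] by auto

lemma bessel_rsquarefree: "rsquarefree (bessel_poly n)"
  unfolding rsquarefree_roots
proof (intro allI notI)
  fix a assume a: "poly (bessel_poly n) a = 0 \<and> poly (pderiv (bessel_poly n)) a = 0"
  then show False using bessel_G[of a n] by simp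
qed

lemma bessel_decomp:
  "bessel_poly n = smult (bd n n) (\<Prod>z\<in>bessel_zeros n. [:-z, 1:])"
  using complex_poly_decompose_rsquarefree[OF bessel_rsquarefree[of n]]
  by (simp add: lead_bessel bessel_zeros_def)

lemma finite_zeros: "finite (bessel_zeros n)"
  unfolding bessel_zeros_def using poly_roots_finite[OF bessel_nz] .

lemma card_zeros: "card (bessel_zeros n) = n"
proof -
  have "n = degree (smult (bd n n) (\<Prod>z\<in>bessel_zeros n. [:-z, 1:]))"
    using bessel_decomp[of n] degree_bessel[of n] by simp
  also have "\<dots> = card (bessel_zeros n)"
    using bd_nn_nz[of n] by (simp add: degree_prod_sum_eq)
  finally show ?thesis by simp
qed

lemma poly_y: "poly (bessel_poly n) z = bd n n * (\<Prod>\<beta>\<in>bessel_zeros n. z - \<beta>)"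
  by (subst bessel_decomp) (simp add: poly_prod)

lemma poly_dy: "poly (pderiv (bessel_poly n)) z = bd n n * (\<Sum>\<alpha>\<in>bessel_zeros n. \<Prod>\<beta>\<in>bessel_zeros n - {\<alpha>}. z - \<beta>)"
  by (subst bessel_decomp) (simp add: pderiv_smult pderiv_prod pderiv_pCons poly_prod poly_sum)

lemma K1: "poly (bessel_poly n) z * poly (bessel_poly n) (-z) = (bd n n)^2 * (\<Prod>\<beta>\<in>bessel_zeros n. \<beta>^2 - z^2)"
proof -
  have "(\<Prod>\<beta>\<in>bessel_zeros n. \<beta>^2 - z^2) = (\<Prod>\<beta>\<in>bessel_zeros n. (z - \<beta>) * (-z - \<beta>))"
    by (rule prod.cong) (simp_all add: algebra_simps power2_eq_square)
  then show ?thesis unfolding poly_y prod.distrib by (simp add: power2_eq_square algebra_simps)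
qed

lemma K2: "poly (pderiv (bessel_poly n)) z * poly (bessel_poly n) (-z) + poly (pderiv (bessel_poly n)) (-z) * poly (bessel_poly n) z
   = -2 * (bd n n)^2 * (\<Sum>\<alpha>\<in>bessel_zeros n. \<alpha> * (\<Prod>\<beta>\<in>bessel_zeros n - {\<alpha>}. \<beta>^2 - z^2))"
proof -
  let ?Z = "bessel_zeros n"
  have fin: "finite ?Z" by (rule finite_zeros)
  have t: "(\<Prod>\<beta>\<in>?Z - {\<alpha>}. z - \<beta>) * (\<Prod>\<beta>\<in>?Z. -z - \<beta>) + (\<Prod>\<beta>\<in>?Z - {\<alpha>}. -z - \<beta>) * (\<Prod>\<beta>\<in>?Z. z - \<beta>)
     = -2 * (\<alpha> * (\<Prod>\<beta>\<in>?Z - {\<alpha>}. \<beta>^2 - z^2))" if a: "\<alpha> \<in> ?Z" for \<alpha>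
  proof -
    have e1: "(\<Prod>\<beta>\<in>?Z. -z - \<beta>) = (-z - \<alpha>) * (\<Prod>\<beta>\<in>?Z - {\<alpha>}. -z - \<beta>)"
      using fin a by (rule prod.remove)
    have e2: "(\<Prod>\<beta>\<in>?Z. z - \<beta>) = (z - \<alpha>) * (\<Prod>\<beta>\<in>?Z - {\<alpha>}. z - \<beta>)"
      using fin a by (rule prod.remove)
    have e3: "(\<Prod>\<beta>\<in>?Z - {\<alpha>}. \<beta>^2 - z^2) = (\<Prod>\<beta>\<in>?Z - {\<alpha>}. z - \<beta>) * (\<Prod>\<beta>\<in>?Z - {\<alpha>}. -z - \<beta>)"
      unfolding prod.distrib[symmetric] by (rule prod.cong) (simp_all add: algebra_simps power2_eq_square)
    show ?thesis unfolding e1 e2 e3 by (simp add: algebra_simps)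
  qed
  have "poly (pderiv (bessel_poly n)) z * poly (bessel_poly n) (-z) + poly (pderiv (bessel_poly n)) (-z) * poly (bessel_poly n) z
     = (bd n n)^2 * (\<Sum>\<alpha>\<in>?Z. (\<Prod>\<beta>\<in>?Z - {\<alpha>}. z - \<beta>) * (\<Prod>\<beta>\<in>?Z. -z - \<beta>) + (\<Prod>\<beta>\<in>?Z - {\<alpha>}. -z - \<beta>) * (\<Prod>\<beta>\<in>?Z. z - \<beta>))"
  proof -
    have "poly (pderiv (bessel_poly n)) z * poly (bessel_poly n) (-z) + poly (pderiv (bessel_poly n)) (-z) * poly (bessel_poly n) z
      = (bd n n)^2 * ((\<Sum>\<alpha>\<in>?Z. \<Prod>\<beta>\<in>?Z - {\<alpha>}. z - \<beta>) * (\<Prod>\<beta>\<in>?Z. -z - \<beta>) + (\<Sum>\<alpha>\<in>?Z. \<Prod>\<beta>\<in>?Z - {\<alpha>}. -z - \<beta>) * (\<Prod>\<beta>\<in>?Z. z - \<beta>))"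
      unfolding poly_y poly_dy by (simp add: power2_eq_square algebra_simps)
    then show ?thesis by (simp add: sum_distrib_right sum.distrib)
  qed
  also have "\<dots> = (bd n n)^2 * (\<Sum>\<alpha>\<in>?Z. -2 * (\<alpha> * (\<Prod>\<beta>\<in>?Z - {\<alpha>}. \<beta>^2 - z^2)))"
    using t by (simp cong: sum.cong)
  finally show ?thesis by (simp add: sum_distrib_left mult_ac)
qed

lemma key_w: "(\<Prod>\<beta>\<in>bessel_zeros n. \<beta>^2 - z^2) - z^2 * (\<Sum>\<alpha>\<in>bessel_zeros n. \<alpha> * (\<Prod>\<beta>\<in>bessel_zeros n - {\<alpha>}. \<beta>^2 - z^2))
   = 1 / (bd n n)^2"
proof -
  have "z^2 * (-2 * (bd n n)^2 * (\<Sum>\<alpha>\<in>bessel_zeros n. \<alpha> * (\<Prod>\<beta>\<in>bessel_zeros n - {\<alpha>}. \<beta>^2 - z^2)))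
        + 2 * ((bd n n)^2 * (\<Prod>\<beta>\<in>bessel_zeros n. \<beta>^2 - z^2)) = 2"
    using bessel_G[of z n] unfolding K2 mult.assoc[of 2] K1 .
  then have "2 * ((bd n n)^2 * ((\<Prod>\<beta>\<in>bessel_zeros n. \<beta>^2 - z^2) - z^2 * (\<Sum>\<alpha>\<in>bessel_zeros n. \<alpha> * (\<Prod>\<beta>\<in>bessel_zeros n - {\<alpha>}. \<beta>^2 - z^2)))) = 2 * 1"
    by (simp add: algebra_simps)
  then have "(bd n n)^2 * ((\<Prod>\<beta>\<in>bessel_zeros n. \<beta>^2 - z^2) - z^2 * (\<Sum>\<alpha>\<in>bessel_zeros n. \<alpha> * (\<Prod>\<beta>\<in>bessel_zeros n - {\<alpha>}. \<beta>^2 - z^2))) = 1"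
    by (simp only: mult_cancel_left) simp
  then show ?thesis using bd_nn_nz[of n] by (simp add: field_simps)
qed

definition Tp :: "nat \<Rightarrow> complex poly" where
  "Tp n = (\<Prod>\<beta>\<in>bessel_zeros n. [:-1, \<beta>^2:])"
definition Sp :: "nat \<Rightarrow> complex poly" where
  "Sp n = (\<Sum>\<alpha>\<in>bessel_zeros n. smult \<alpha> (\<Prod>\<beta>\<in>bessel_zeros n - {\<alpha>}. [:-1, \<beta>^2:]))"

lemma TS_rev:
  assumes n: "n \<ge> 1"
  shows "Tp n - Sp n = monom (1 / (bd n n)^2) n"
proof -
  let ?Z = "bessel_zeros n"
  let ?D = "Tp n - Sp n - monom (1 / (bd n n)^2) n"
  have pt: "poly ?D u = 0" if u: "u \<noteq> 0" for u
  proof -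
    define z where "z = csqrt (1/u)"
    have zu: "u * z^2 = 1" unfolding z_def using u by simp
    have fac: "\<beta>^2 * u - 1 = u * (\<beta>^2 - z^2)" for \<beta> using zu by (simp add: algebra_simps)
    have fac2: "u * \<beta>^2 - 1 = u * (\<beta>^2 - z^2)" for \<beta> using zu by (simp add: algebra_simps)
    have pT: "poly (Tp n) u = u^n * (\<Prod>\<beta>\<in>?Z. \<beta>^2 - z^2)"
      unfolding Tp_def by (simp add: poly_prod fac2 prod.distrib card_zeros)
    have pS1: "(\<Prod>\<beta>\<in>?Z - {\<alpha>}. u * \<beta>^2 - 1) = u^(n-1) * (\<Prod>\<beta>\<in>?Z - {\<alpha>}. \<beta>^2 - z^2)"
      if "\<alpha> \<in> ?Z" for \<alpha>
      using that finite_zeros[of n] by (simp add: fac2 prod.distrib card_zeros card_Diff_singleton)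
    have tm: "poly (smult \<alpha> (\<Prod>\<beta>\<in>?Z - {\<alpha>}. [:-1, \<beta>^2:])) u = u^(n-1) * (\<alpha> * (\<Prod>\<beta>\<in>?Z - {\<alpha>}. \<beta>^2 - z^2))"
      if "\<alpha> \<in> ?Z" for \<alpha>
      using pS1[OF that] by (simp add: poly_prod)
    have pS: "poly (Sp n) u = u^(n-1) * (\<Sum>\<alpha>\<in>?Z. \<alpha> * (\<Prod>\<beta>\<in>?Z - {\<alpha>}. \<beta>^2 - z^2))"
      unfolding Sp_def poly_sum sum_distrib_left by (intro sum.cong refl tm)
    have un: "u^n = u * u^(n-1)" using n by (metis One_nat_def Suc_pred less_eq_Suc_le power_Suc)
    have "poly (Tp n) u - poly (Sp n) u = u^n * ((\<Prod>\<beta>\<in>?Z. \<beta>^2 - z^2) - z^2 * (\<Sum>\<alpha>\<in>?Z. \<alpha> * (\<Prod>\<beta>\<in>?Z - {\<alpha>}. \<beta>^2 - z^2)))"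
      unfolding pT pS un using zu by (simp add: algebra_simps)
    also have "\<dots> = u^n / (bd n n)^2" by (simp add: key_w)
    finally show ?thesis by (simp add: poly_monom)
  qed
  have "?D = 0"
  proof (rule ccontr)
    assume "?D \<noteq> 0"
    then have "finite {u. poly ?D u = 0}" by (rule poly_roots_finite)
    moreover have "{u::complex. u \<noteq> 0} \<subseteq> {u. poly ?D u = 0}" using pt by auto
    ultimately have "finite {u::complex. u \<noteq> 0}" by (rule finite_subset[rotated])
    then have "finite (insert 0 {u::complex. u \<noteq> 0})" by simp
    moreover have "insert 0 {u::complex. u \<noteq> 0} = UNIV" by auto
    ultimately show False using infinite_UNIV_char_0[where 'a=complex] by simp
  qed
  then show ?thesis by simp
qed

definition ps :: "nat \<Rightarrow> nat \<Rightarrow> complex" where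
  "ps n j = (\<Sum>\<alpha>\<in>bessel_zeros n. \<alpha>^(2*j+1))"

lemma geo_fps: fixes a :: complex shows "fps_of_poly [:-1, a^2:] * Abs_fps (\<lambda>j. a^(2*j+1)) = fps_const (-a)"
proof (rule fps_ext)
  fix k
  have e: "fps_of_poly [:-1, a^2:] = fps_const (-1) + fps_const (a^2) * fps_X"
  proof (rule fps_ext)
    fix k show "fps_of_poly [:-1, a^2:] $ k = (fps_const (-1) + fps_const (a^2) * fps_X) $ k"
      by (cases k) (auto simp: coeff_pCons split: nat.split)
  qed
  have "(fps_const (-1) + fps_const (a^2) * fps_X) * Abs_fps (\<lambda>j. a^(2*j+1)) = 
      fps_const (-1) * Abs_fps (\<lambda>j. a^(2*j+1)) + fps_X * (fps_const (a^2) * Abs_fps (\<lambda>j. a^(2*j+1)))"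
    by (simp add: algebra_simps)
  moreover have "(fps_const (-1) * Abs_fps (\<lambda>j. a^(2*j+1)) + fps_X * (fps_const (a^2) * Abs_fps (\<lambda>j. a^(2*j+1)))) $ k = fps_const (-a) $ k"
  proof (cases k)
    case 0 then show ?thesis by simp
  next
    case (Suc j)
    have "a^2 * a^(2*j+1) = a^(2*Suc j+1)" by (simp add: power_add[symmetric] power2_eq_square[symmetric] algebra_simps)
    then show ?thesis using Suc by simp
  qed
  ultimately show "(fps_of_poly [:-1, a^2:] * Abs_fps (\<lambda>j. a^(2*j+1))) $ k = fps_const (-a) $ k"
    unfolding e by simp
qed

lemma ps_fps:
  assumes n: "n \<ge> 1"
  shows "fps_of_poly (Tp n) * (Abs_fps (ps n) + 1) = fps_const (1 / (bd n n)^2) * fps_X^n"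
proof -
  let ?Z = "bessel_zeros n"
  let ?G = "\<lambda>a. Abs_fps (\<lambda>j. a^(2*j+1)) :: complex fps"
  have P: "Abs_fps (ps n) = (\<Sum>a\<in>?Z. ?G a)"
    by (rule fps_ext) (simp add: ps_def fps_sum_nth)
  have tm: "fps_of_poly (Tp n) * ?G a = - fps_of_poly (smult a (\<Prod>\<beta>\<in>?Z - {a}. [:-1, \<beta>^2:]))"
    if a: "a \<in> ?Z" for a
  proof -
    have "Tp n = [:-1, a^2:] * (\<Prod>\<beta>\<in>?Z - {a}. [:-1, \<beta>^2:])"
      unfolding Tp_def using finite_zeros a by (rule prod.remove)
    then have "fps_of_poly (Tp n) * ?G a = (fps_of_poly [:-1, a^2:] * ?G a) * fps_of_poly (\<Prod>\<beta>\<in>?Z - {a}. [:-1, \<beta>^2:])"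
      by (simp add: fps_of_poly_mult mult_ac)
    also have "\<dots> = - fps_of_poly (smult a (\<Prod>\<beta>\<in>?Z - {a}. [:-1, \<beta>^2:]))"
      unfolding geo_fps by (simp add: fps_of_poly_smult)
    finally show ?thesis .
  qed
  have "fps_of_poly (Tp n) * Abs_fps (ps n) = - fps_of_poly (Sp n)"
    unfolding P sum_distrib_left Sp_def fps_of_poly_sum sum_negf[symmetric]
    by (intro sum.cong refl tm)
  then have "fps_of_poly (Tp n) * (Abs_fps (ps n) + 1) = fps_of_poly (Tp n - Sp n)"
    by (simp add: distrib_left fps_of_poly_simps)
  also have "\<dots> = fps_const (1 / (bd n n)^2) * fps_X^n"
    unfolding TS_rev[OF n] by (simp add: fps_of_poly_monom)
  finally show ?thesis .
qed

lemma Tp0: "fps_of_poly (Tp n) $ 0 = (-1)^n"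
proof -
  have "fps_of_poly (Tp n) $ 0 = poly (Tp n) 0" by (simp add: poly_0_coeff_0)
  also have "\<dots> = (-1)^n" unfolding Tp_def by (simp add: poly_prod card_zeros)
  finally show ?thesis .
qed

lemma ps_vals:
  assumes n: "n \<ge> 1"
  shows "j < n \<Longrightarrow> ps n j = (if j = 0 then -1 else 0)"
    and "ps n n = (-1)^n / (bd n n)^2"
proof -
  let ?T = "fps_of_poly (Tp n)"
  have T0: "?T $ 0 \<noteq> 0" by (simp only: Tp0) simp
  have "Abs_fps (ps n) + 1 = inverse ?T * (?T * (Abs_fps (ps n) + 1))"
    using inverse_mult_eq_1[OF T0] by (simp add: mult.assoc[symmetric])
  also have "\<dots> = fps_X^n * (fps_const (1 / (bd n n)^2) * inverse ?T)"
    unfolding ps_fps[OF n] by (simp add: mult_ac)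
  finally have E: "Abs_fps (ps n) + 1 = fps_X^n * (fps_const (1 / (bd n n)^2) * inverse ?T)" .
  have c: "(Abs_fps (ps n) + 1) $ j = (if j < n then 0 else (fps_const (1 / (bd n n)^2) * inverse ?T) $ (j - n))" for j
    unfolding E by (rule fps_X_power_mult_nth)
  show "j < n \<Longrightarrow> ps n j = (if j = 0 then -1 else 0)"
    using c[of j] by (cases "j = 0") (auto simp: algebra_simps eq_neg_iff_add_eq_0)
  show "ps n n = (-1)^n / (bd n n)^2"
  proof -
    have iv: "inverse ((-1::complex)^n) = (-1)^n" by (cases "even n") simp_all
    have h1: "(Abs_fps (ps n) + 1) $ n = ps n n" using n by simp
    have h2: "(fps_const (1 / (bd n n)^2) * inverse ?T) $ 0 = (1 / (bd n n)^2) * inverse (?T $ 0)"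
      by simp
    have "ps n n = (1 / (bd n n)^2) * inverse (?T $ 0)"
      using c[of n] unfolding h1 h2[symmetric] by simp
    also have "\<dots> = (-1)^n / (bd n n)^2" unfolding Tp0 iv by simp
    finally show ?thesis .

  qed
qed

definition tt :: "nat \<Rightarrow> nat \<Rightarrow> nat \<Rightarrow> complex" where
  "tt n m i = of_nat (m choose i) * ((-1)^i - 1) / 2^i * (\<Sum>\<alpha>\<in>bessel_zeros n. \<alpha>^i)"

lemma A_formula: "A_sum m n = (\<Sum>i\<le>m. tt n m i)"
proof -
  have pw: "(1 - \<alpha>/2)^m - (1 + \<alpha>/2)^m = (\<Sum>i\<le>m. of_nat (m choose i) * ((-1)^i - 1) / 2^i * \<alpha>^i)" for \<alpha> :: complex
  proof -
    have "(1 - \<alpha>/2)^m = (\<Sum>i\<le>m. of_nat (m choose i) * (-\<alpha>/2)^i * 1^(m-i))"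
      using binomial_ring[of "-\<alpha>/2" 1 m] by simp
    moreover have "(1 + \<alpha>/2)^m = (\<Sum>i\<le>m. of_nat (m choose i) * (\<alpha>/2)^i * 1^(m-i))"
      using binomial_ring[of "\<alpha>/2" 1 m] by (simp add: add.commute)
    ultimately show ?thesis
      by (simp add: sum_subtractf[symmetric] power_divide power_minus' algebra_simps diff_divide_distrib)
  qed
  show ?thesis unfolding A_sum_def tt_def pw
    by (subst sum.swap) (simp add: sum_distrib_left)
qed

lemma tt_zero:
  assumes n: "n \<ge> 1" and i: "i \<le> 2*n+1" "i \<noteq> 1" "i \<noteq> 2*n+1"
  shows "tt n m i = 0"
proof (cases "even i")
  case True then show ?thesis by (simp add: tt_def)
next
  case False
  then obtain j where j: "i = 2*j+1" by (metis oddE)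
  have "1 \<le> j" "j < n" using i j by auto
  then have "ps n j = 0" using ps_vals(1)[OF n] by auto
  then show ?thesis by (simp add: tt_def ps_def j)
qed

lemma sum_tt:
  assumes n: "n \<ge> 1" and m: "1 \<le> m" "m \<le> 2*n+1"
  shows "(\<Sum>i\<le>m. tt n m i) = tt n m 1 + (if m = 2*n+1 then tt n m (2*n+1) else 0)"
proof -
  let ?S = "{i. i \<le> m \<and> (i = 1 \<or> i = 2*n+1)}"
  have "(\<Sum>i\<le>m. tt n m i) = (\<Sum>i\<in>?S. tt n m i)"
    by (rule sum.mono_neutral_right) (use n m in \<open>auto intro!: tt_zero\<close>)
  also have "\<dots> = tt n m 1 + (if m = 2*n+1 then tt n m (2*n+1) else 0)"
  proof (cases "m = 2*n+1")
    case True
    then have "?S = {1, 2*n+1}" using n by auto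
    then show ?thesis using True n by simp
  next
    case False
    then have "?S = {1}" using m by auto
    then show ?thesis using False by simp
  qed
  finally show ?thesis .
qed

lemma tt1: "n \<ge> 1 \<Longrightarrow> tt n m 1 = of_nat m"
  using ps_vals(1)[of n 0] by (simp add: tt_def ps_def)

lemma tt_top: assumes "n \<ge> 1" shows "tt n (2*n+1) (2*n+1) = - ((-1)^n / (bd n n)^2) / 4^n"
proof -
  have a: "(-1::complex)^(2*n+1) = -1" by simp
  have b: "(2::complex)^(2*n+1) = 2 * 4^n" by (simp add: power_mult)
  have c: "(\<Sum>\<alpha>\<in>bessel_zeros n. \<alpha>^(2*n+1)) = (-1)^n / (bd n n)^2"
    using ps_vals(2)[OF assms] by (simp add: ps_def)
  show ?thesis unfolding tt_def a b c by simp
qed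

lemma bd_top: "(bd n n)^2 * 4^n = (of_nat (fact (2*n)))^2 / (of_nat (fact n))^2"
proof -
  have e: "((2::complex)^n)^2 = 4^n"
    unfolding power2_eq_square power_mult_distrib[symmetric] by simp
  have f: "n + n = n * 2" by simp
  show ?thesis by (simp add: bd_def power_divide power_mult_distrib e field_simps) (simp only: f)
qed

theorem proposition1:
  fixes n :: nat
  assumes "n \<ge> 1"
  shows "(\<forall>m. 1 \<le> m \<and> m \<le> 2*n \<longrightarrow> of_nat m - A_sum m n = 0) \<and>
         of_nat (2*n+1) - A_sum (2*n+1) n
           = (-1) ^ n * (of_nat (fact n))^2 / (of_nat (fact (2*n)))^2"
proof
  show "\<forall>m. 1 \<le> m \<and> m \<le> 2*n \<longrightarrow> of_nat m - A_sum m n = 0"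
  proof (intro allI impI)
    fix m assume m: "1 \<le> m \<and> m \<le> 2*n"
    then show "of_nat m - A_sum m n = 0"
      unfolding A_formula using sum_tt[OF assms, of m] tt1[OF assms, of m] by simp
  qed
  have "of_nat (2*n+1) - A_sum (2*n+1) n = (-1)^n / ((bd n n)^2 * 4^n)"
    unfolding A_formula using sum_tt[OF assms, of "2*n+1"] tt1[OF assms, of "2*n+1"] tt_top[OF assms]
    by (simp add: field_simps)
  also have "\<dots> = (-1) ^ n * (of_nat (fact n))^2 / (of_nat (fact (2*n)))^2"
    unfolding bd_top by simp
  finally show "of_nat (2*n+1) - A_sum (2*n+1) n = (-1) ^ n * (of_nat (fact n))^2 / (of_nat (fact (2*n)))^2" .
qed

end
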